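(* Let $X$ be a Hausdorff space without isolated points. If \textsc{Bob} has a winning strategy in the game $\mathsf{BM}_\mathrm{fin}(X)$, then $X$ is productively Baire.
   Context: The game $\mathsf{BM}_\mathrm{fin}(X)$ on a topological space $X$ is played by \textsc{Alice} and \textsc{Bob} as follows. \textsc{Alice} plays a non-empty open set $A_0$; \textsc{Bob} plays a finite collection $\mathcal{B}_0$ of non-empty open subsets of $A_0$. In inning $n+1$, for each $B \in \mathcal{B}_n$ \textsc{Alice} plays a non-empty open set $A_B \subseteq B$; let $\mathcal{A}_{n+1}=\{A_B : B\in\mathcal{B}_n\}$; then \textsc{Bob} plays a finite collection $\mathcal{B}_{n+1}$ of non-empty open subsets of $\bigcup\mathcal{A}_{n+1}$. Put $B_n=\bigcup\mathcal{B}_n$. \textsc{Bob} wins the play if $\bigcap_{n\in\omega}B_n\neq\emptyset$; otherwise \textsc{Alice} wins. A Baire space is a space in which countable intersections of dense open sets are dense. A Baire space $X$ is productively Baire if $X\times Y$ is Baire for every Baire space $Y$. *)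

theory Defs
  imports "HOL-Analysis.Analysis"
begin

definition Baire_space :: "'a topology \<Rightarrow> bool" where
  "Baire_space X \<longleftrightarrow>
     (\<forall>U :: nat \<Rightarrow> 'a set.
        (\<forall>n. openin X (U n) \<and> X closure_of (U n) = topspace X) \<longrightarrow>
        X closure_of (topspace X \<inter> (\<Inter>n. U n)) = topspace X)"

text \<open>Alice's move in inning n is represented by a
  function g n assigning to each set B of Bob's previous collection the
  open set A_B = g n B.  For uniformity, inning 0 is treated as a response
  to the collection {topspace X}, i.e. A_0 = g 0 (topspace X).
  Bob's strategy sigma maps the list of Alice's moves so far
  [g 0, ..., g n] to Bob's collection B_n.\<close>

definition bob_coll ::
    "(('a set \<Rightarrow> 'a set) list \<Rightarrow> 'a set set) \<Rightarrow> (nat \<Rightarrow> 'a set \<Rightarrow> 'a set) \<Rightarrow> nat \<Rightarrow> 'a set set" where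
  "bob_coll \<sigma> g n = \<sigma> (map g [0..<Suc n])"

definition prev_coll ::
    "'a topology \<Rightarrow> (('a set \<Rightarrow> 'a set) list \<Rightarrow> 'a set set) \<Rightarrow> (nat \<Rightarrow> 'a set \<Rightarrow> 'a set) \<Rightarrow> nat \<Rightarrow> 'a set set" where
  "prev_coll X \<sigma> g n = (if n = 0 then {topspace X} else bob_coll \<sigma> g (n - 1))"

definition alice_legal ::
    "'a topology \<Rightarrow> (('a set \<Rightarrow> 'a set) list \<Rightarrow> 'a set set) \<Rightarrow> (nat \<Rightarrow> 'a set \<Rightarrow> 'a set) \<Rightarrow> nat \<Rightarrow> bool" where
  "alice_legal X \<sigma> g n \<longleftrightarrow>
     (\<forall>B \<in> prev_coll X \<sigma> g n. openin X (g n B) \<and> g n B \<noteq> {} \<and> g n B \<subseteq> B)"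

definition bob_legal ::
    "'a topology \<Rightarrow> (('a set \<Rightarrow> 'a set) list \<Rightarrow> 'a set set) \<Rightarrow> (nat \<Rightarrow> 'a set \<Rightarrow> 'a set) \<Rightarrow> nat \<Rightarrow> bool" where
  "bob_legal X \<sigma> g n \<longleftrightarrow>
     finite (bob_coll \<sigma> g n) \<and>
     (\<forall>B \<in> bob_coll \<sigma> g n. openin X B \<and> B \<noteq> {} \<and>
        B \<subseteq> \<Union> (g n ` prev_coll X \<sigma> g n))"

definition bob_winning_strategy ::
    "'a topology \<Rightarrow> (('a set \<Rightarrow> 'a set) list \<Rightarrow> 'a set set) \<Rightarrow> bool" where
  "bob_winning_strategy X \<sigma> \<longleftrightarrow>
     (\<forall>g n. (\<forall>k\<le>n. alice_legal X \<sigma> g k) \<longrightarrow> bob_legal X \<sigma> g n) \<and>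
     (\<forall>g. (\<forall>n. alice_legal X \<sigma> g n) \<longrightarrow> (\<Inter>n. \<Union> (bob_coll \<sigma> g n)) \<noteq> {})"

definition bob_has_winning_strategy :: "'a topology \<Rightarrow> bool" where
  "bob_has_winning_strategy X \<longleftrightarrow> (\<exists>\<sigma>. bob_winning_strategy X \<sigma>)"

end

theory Submission
  imports Defs
begin

lemma dense_meets:
  assumes "X closure_of G = topspace X" "openin X S" "S \<noteq> {}"
  shows "S \<inter> G \<noteq> {}"
  using openin_Int_closure_of_eq_empty[OF assms(2), of G] assms openin_subset by fastforce

lemma closure_eq_topspaceI:
  assumes "S \<subseteq> topspace X" "\<And>W. openin X W \<Longrightarrow> W \<noteq> {} \<Longrightarrow> W \<inter> S \<noteq> {}"
  shows "X closure_of S = topspace X"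
proof
  show "X closure_of S \<subseteq> topspace X" by (rule closure_of_subset_topspace)
  show "topspace X \<subseteq> X closure_of S"
    unfolding in_closure_of subset_iff using assms(2) by blast
qed

lemma bob_coll_cong: "(\<And>i. i \<le> n \<Longrightarrow> g i = g' i) \<Longrightarrow> bob_coll \<sigma> g n = bob_coll \<sigma> g' n"
proof -
  assume a: "\<And>i. i \<le> n \<Longrightarrow> g i = g' i"
  have "map g [0..<Suc n] = map g' [0..<Suc n]"
    by (rule map_cong) (auto simp: a less_Suc_eq_le)
  then show ?thesis unfolding bob_coll_def by (simp only:)
qed

lemma prev_coll_cong: "(\<And>i. i \<le> n \<Longrightarrow> g i = g' i) \<Longrightarrow> prev_coll X \<sigma> g n = prev_coll X \<sigma> g' n"
  unfolding prev_coll_def using bob_coll_cong[of "n - 1" g g' \<sigma>] by auto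

lemma alice_legal_cong: "(\<And>i. i \<le> n \<Longrightarrow> g i = g' i) \<Longrightarrow> alice_legal X \<sigma> g n = alice_legal X \<sigma> g' n"
  unfolding alice_legal_def using prev_coll_cong[of n g g' X \<sigma>] by auto

lemma box_shrink:
  assumes "finite C" "\<forall>B\<in>C. openin X B \<and> B \<noteq> {}" "openin Y V" "V \<noteq> {}"
   "openin (prod_topology X Y) G" "prod_topology X Y closure_of G = topspace (prod_topology X Y)"
  shows "\<exists>f V'. openin Y V' \<and> V' \<noteq> {} \<and> V' \<subseteq> V \<and>
           (\<forall>B\<in>C. openin X (f B) \<and> f B \<noteq> {} \<and> f B \<subseteq> B \<and> f B \<times> V' \<subseteq> G)"
  using assms(1,2)
proof (induction C rule: finite_induct)
  case empty
  show ?case using assms by blast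
next
  case (insert B C)
  then obtain f V1 where f: "openin Y V1" "V1 \<noteq> {}" "V1 \<subseteq> V"
     "\<forall>B\<in>C. openin X (f B) \<and> f B \<noteq> {} \<and> f B \<subseteq> B \<and> f B \<times> V1 \<subseteq> G" by auto
  have B: "openin X B" "B \<noteq> {}" using insert by auto
  have o: "openin (prod_topology X Y) (B \<times> V1)" using B f by (simp add: openin_prod_Times_iff)
  have "(B \<times> V1) \<inter> G \<noteq> {}" using dense_meets[OF assms(6) o] B f by auto
  then obtain a b where ab: "(a,b) \<in> (B \<times> V1) \<inter> G" by auto
  have "openin (prod_topology X Y) ((B \<times> V1) \<inter> G)" using o assms(5) by (rule openin_Int)
  then obtain A' V2 where A': "openin X A'" "openin Y V2" "a \<in> A'" "b \<in> V2" "A' \<times> V2 \<subseteq> (B \<times> V1) \<inter> G"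
    using ab unfolding openin_prod_topology_alt by meson
  have sub: "A' \<subseteq> B" "V2 \<subseteq> V1" using A' by blast+
  have "\<forall>B'\<in>C. f B' \<times> V2 \<subseteq> G" using f(4) sub by blast
  have "\<forall>B'\<in>insert B C. openin X ((f(B := A')) B') \<and> (f(B := A')) B' \<noteq> {} \<and> (f(B := A')) B' \<subseteq> B' \<and> (f(B := A')) B' \<times> V2 \<subseteq> G"
  proof
    fix B' assume "B' \<in> insert B C"
    then show "openin X ((f(B := A')) B') \<and> (f(B := A')) B' \<noteq> {} \<and> (f(B := A')) B' \<subseteq> B' \<and> (f(B := A')) B' \<times> V2 \<subseteq> G"
    proof (cases "B' = B")
      case True then show ?thesis using A' sub by auto
    next
      case False then show ?thesis using \<open>B' \<in> insert B C\<close> f(4) \<open>\<forall>B'\<in>C. f B' \<times> V2 \<subseteq> G\<close> by auto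
    qed
  qed
  moreover have "openin Y V2 \<and> V2 \<noteq> {} \<and> V2 \<subseteq> V" using A' sub f by auto
  ultimately show ?case by blast
qed

lemma disjoint_refinement:
  fixes Y :: "'b topology" and P :: "'c \<times> 'b set \<Rightarrow> bool"
  assumes "openin Y V"
    and dense: "\<And>V''. openin Y V'' \<Longrightarrow> V'' \<noteq> {} \<Longrightarrow> V'' \<subseteq> V \<Longrightarrow>
        \<exists>q. P q \<and> snd q \<subseteq> V'' \<and> openin Y (snd q) \<and> snd q \<noteq> {}"
  shows "\<exists>F. (\<forall>q\<in>F. P q \<and> openin Y (snd q) \<and> snd q \<noteq> {} \<and> snd q \<subseteq> V) \<and>
             (\<forall>q\<in>F. \<forall>q'\<in>F. q \<noteq> q' \<longrightarrow> snd q \<inter> snd q' = {}) \<and>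
             V \<subseteq> Y closure_of (\<Union>(snd ` F))"
proof -
  define good where "good q \<longleftrightarrow> P q \<and> openin Y (snd q) \<and> snd q \<noteq> {} \<and> snd q \<subseteq> V" for q
  define A where "A = {F. (\<forall>q\<in>F. good q) \<and> (\<forall>q\<in>F. \<forall>q'\<in>F. q \<noteq> q' \<longrightarrow> snd q \<inter> snd q' = {})}"
  have "\<forall>C\<in>chains A. \<Union>C \<in> A"
  proof
    fix C assume C: "C \<in> chains A"
    then have CA: "C \<subseteq> A" and ch: "\<forall>F\<in>C. \<forall>F'\<in>C. F \<subseteq> F' \<or> F' \<subseteq> F"
      unfolding chains_def chain_subset_def by auto
    show "\<Union>C \<in> A"
      unfolding A_def
    proof (intro CollectI conjI ballI impI)
      fix q assume "q \<in> \<Union>C" then show "good q" using CA unfolding A_def by blast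
    next
      fix q q' assume q: "q \<in> \<Union>C" and q': "q' \<in> \<Union>C" and ne: "q \<noteq> q'"
      then obtain F F' where F: "F \<in> C" "q \<in> F" and F': "F' \<in> C" "q' \<in> F'" by blast
      from ch F(1) F'(1) have "F \<subseteq> F' \<or> F' \<subseteq> F" by blast
      then show "snd q \<inter> snd q' = {}"
      proof
        assume "F \<subseteq> F'" then show ?thesis using CA F F' ne unfolding A_def by blast
      next
        assume "F' \<subseteq> F" then show ?thesis using CA F F' ne unfolding A_def by blast
      qed
    qed
  qed
  from Zorn_Lemma[OF this] obtain M where M: "M \<in> A" and max: "\<forall>F\<in>A. M \<subseteq> F \<longrightarrow> F = M" by blast
  have "V \<subseteq> Y closure_of (\<Union>(snd ` M))"
  proof (rule ccontr)
    assume nsub: "\<not> ?thesis"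
    define V'' where "V'' = V - Y closure_of (\<Union>(snd ` M))"
    have "openin Y V''" unfolding V''_def using assms(1) by (simp add: openin_diff)
    moreover have "V'' \<noteq> {}" using nsub unfolding V''_def by blast
    ultimately obtain q where q: "P q" "snd q \<subseteq> V''" "openin Y (snd q)" "snd q \<noteq> {}"
      using dense[of V''] unfolding V''_def by blast
    have gq: "good q" using q unfolding good_def V''_def by blast
    have qM: "q \<notin> M"
    proof
      assume "q \<in> M"
      then have "snd q \<subseteq> Y closure_of (\<Union>(snd ` M))"
        using closure_of_subset[of "\<Union>(snd ` M)" Y] M unfolding A_def good_def
        by (auto dest!: openin_subset)
      then show False using q(2,4) unfolding V''_def by blast
    qed
    have disj: "\<forall>q'\<in>M. snd q \<inter> snd q' = {}"
    proof
      fix q' assume "q' \<in> M"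
      then have "snd q' \<subseteq> Y closure_of (\<Union>(snd ` M))"
        using closure_of_subset[of "\<Union>(snd ` M)" Y] M unfolding A_def good_def
        by (auto dest!: openin_subset)
      then show "snd q \<inter> snd q' = {}" using q(2) unfolding V''_def by blast
    qed
    have "insert q M \<in> A" using M gq disj unfolding A_def by auto
    then have "insert q M = M" using max by blast
    then show False using qM by blast
  qed
  then show ?thesis using M unfolding A_def good_def by blast
qed

context
  fixes X :: "'a topology" and Y :: "'b topology"
    and \<sigma> :: "('a set \<Rightarrow> 'a set) list \<Rightarrow> 'a set set"
    and U :: "nat \<Rightarrow> ('a \<times> 'b) set" and U0 :: "'a set" and V0 :: "'b set"
  assumes win: "bob_winning_strategy X \<sigma>"
    and Uopen: "\<And>n. openin (prod_topology X Y) (U n)"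
    and Udense: "\<And>n. prod_topology X Y closure_of (U n) = topspace (prod_topology X Y)"
    and U0: "openin X U0" "U0 \<noteq> {}" and V0: "openin Y V0" "V0 \<noteq> {}"
    and BY: "Baire_space Y"
begin

definition good :: "nat \<Rightarrow> (nat \<Rightarrow> 'a set \<Rightarrow> 'a set) \<times> 'b set \<Rightarrow> bool" where
  "good n p \<longleftrightarrow> openin Y (snd p) \<and> snd p \<noteq> {} \<and> snd p \<subseteq> V0 \<and>
     (\<forall>k\<le>n. alice_legal X \<sigma> (fst p) k) \<and> fst p 0 (topspace X) \<subseteq> U0 \<and>
     (n > 0 \<longrightarrow> (\<forall>B\<in>prev_coll X \<sigma> (fst p) n. fst p n B \<times> snd p \<subseteq> U (n - 1)))"

definition Inv :: "nat \<Rightarrow> ((nat \<Rightarrow> 'a set \<Rightarrow> 'a set) \<times> 'b set) set \<Rightarrow> bool" where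
  "Inv n T \<longleftrightarrow> (\<forall>p\<in>T. good n p) \<and> (\<forall>p\<in>T. \<forall>q\<in>T. p \<noteq> q \<longrightarrow> snd p \<inter> snd q = {}) \<and>
     V0 \<subseteq> Y closure_of (\<Union>(snd ` T))"

definition ext :: "nat \<Rightarrow> (nat \<Rightarrow> 'a set \<Rightarrow> 'a set) \<times> 'b set \<Rightarrow> (nat \<Rightarrow> 'a set \<Rightarrow> 'a set) \<times> 'b set \<Rightarrow> bool" where
  "ext n p q \<longleftrightarrow> (\<forall>i\<le>n. fst q i = fst p i) \<and> snd q \<subseteq> snd p"

lemma Inv0: "Inv 0 {(\<lambda>_ _. U0, V0)}"
proof -
  have "alice_legal X \<sigma> (\<lambda>_ _. U0) 0" unfolding alice_legal_def prev_coll_def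
    using U0 openin_subset by auto
  moreover have "V0 \<subseteq> Y closure_of V0" using V0 openin_subset closure_of_subset by metis
  ultimately show ?thesis unfolding Inv_def good_def using V0 by auto
qed

lemma W1: "\<forall>g n. (\<forall>k\<le>n. alice_legal X \<sigma> g k) \<longrightarrow> bob_legal X \<sigma> g n"
  using win unfolding bob_winning_strategy_def by (rule conjunct1)

lemma step_dense:
  assumes p: "good n p" and V'': "openin Y V''" "V'' \<noteq> {}" "V'' \<subseteq> snd p"
  shows "\<exists>q. (good (Suc n) q \<and> ext n p q) \<and> snd q \<subseteq> V'' \<and> openin Y (snd q) \<and> snd q \<noteq> {}"
proof -
  define C where "C = bob_coll \<sigma> (fst p) n"
  have pl: "\<forall>k\<le>n. alice_legal X \<sigma> (fst p) k" using p unfolding good_def by (elim conjE)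
  have "bob_legal X \<sigma> (fst p) n" using W1 pl by simp
  then have C: "finite C" "\<forall>B\<in>C. openin X B \<and> B \<noteq> {}" unfolding bob_legal_def C_def by auto
  have "\<exists>f V'. openin Y V' \<and> V' \<noteq> {} \<and> V' \<subseteq> V'' \<and>
           (\<forall>B\<in>C. openin X (f B) \<and> f B \<noteq> {} \<and> f B \<subseteq> B \<and> f B \<times> V' \<subseteq> U n)"
    by (rule box_shrink[OF C V''(1,2) Uopen[of n] Udense[of n]])
  then obtain f V' where f: "openin Y V'" "V' \<noteq> {}" "V' \<subseteq> V''"
     "\<forall>B\<in>C. openin X (f B) \<and> f B \<noteq> {} \<and> f B \<subseteq> B \<and> f B \<times> V' \<subseteq> U n"
    by (elim exE conjE) (rule that)
  define g' where "g' = (fst p)(Suc n := f)"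
  have agree: "\<And>i. i \<le> n \<Longrightarrow> g' i = fst p i" unfolding g'_def by auto
  have "bob_coll \<sigma> g' n = C"
    unfolding C_def by (rule bob_coll_cong) (rule agree)
  then have prev: "prev_coll X \<sigma> g' (Suc n) = C"
    unfolding prev_coll_def by simp
  have leg: "\<forall>k\<le>Suc n. alice_legal X \<sigma> g' k"
  proof (intro allI impI)
    fix k assume "k \<le> Suc n"
    show "alice_legal X \<sigma> g' k"
    proof (cases "k = Suc n")
      case True
      have "g' (Suc n) = f" unfolding g'_def by simp
      then show ?thesis unfolding alice_legal_def True prev using f(4) by simp
    next
      case False
      then have "k \<le> n" using \<open>k \<le> Suc n\<close> by simp
      then have "alice_legal X \<sigma> g' k = alice_legal X \<sigma> (fst p) k"
        by (intro alice_legal_cong) (simp add: agree)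
      then show ?thesis using pl \<open>k \<le> n\<close> by simp
    qed
  qed
  have box: "\<forall>B\<in>prev_coll X \<sigma> g' (Suc n). g' (Suc n) B \<times> V' \<subseteq> U (Suc n - 1)"
    unfolding prev using f(4) by (simp add: g'_def)
  have pV: "snd p \<subseteq> V0" "fst p 0 (topspace X) \<subseteq> U0" using p unfolding good_def by simp_all
  have g0: "g' 0 (topspace X) \<subseteq> U0" using agree[of 0] pV(2) by simp
  have "V' \<subseteq> V0" using f(3) V''(3) pV(1) by blast
  then have "good (Suc n) (g', V')" unfolding good_def fst_conv snd_conv
    using f(1,2) leg g0 box by blast
  moreover have "ext n p (g', V')" unfolding ext_def fst_conv snd_conv using agree f(3) V''(3) by auto
  ultimately show ?thesis using f(1,2,3) by (intro exI[of _ "(g', V')"]) simp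
qed

lemma step:
  assumes "Inv n T"
  shows "\<exists>T'. Inv (Suc n) T' \<and> (\<forall>q\<in>T'. \<exists>p\<in>T. ext n p q)"
proof -
  have "\<forall>p\<in>T. \<exists>F. (\<forall>q\<in>F. (good (Suc n) q \<and> ext n p q) \<and> openin Y (snd q) \<and> snd q \<noteq> {} \<and> snd q \<subseteq> snd p) \<and>
             (\<forall>q\<in>F. \<forall>q'\<in>F. q \<noteq> q' \<longrightarrow> snd q \<inter> snd q' = {}) \<and>
             snd p \<subseteq> Y closure_of (\<Union>(snd ` F))"
  proof
    fix p assume "p \<in> T"
    then have gp: "good n p" using assms unfolding Inv_def by blast
    then have "openin Y (snd p)" unfolding good_def by blast
    then show "\<exists>F. (\<forall>q\<in>F. (good (Suc n) q \<and> ext n p q) \<and> openin Y (snd q) \<and> snd q \<noteq> {} \<and> snd q \<subseteq> snd p) \<and>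
             (\<forall>q\<in>F. \<forall>q'\<in>F. q \<noteq> q' \<longrightarrow> snd q \<inter> snd q' = {}) \<and>
             snd p \<subseteq> Y closure_of (\<Union>(snd ` F))"
      by (rule disjoint_refinement) (rule step_dense[OF gp])
  qed
  then obtain Fs where Fs: "\<And>p. p \<in> T \<Longrightarrow> (\<forall>q\<in>Fs p. (good (Suc n) q \<and> ext n p q) \<and> openin Y (snd q) \<and> snd q \<noteq> {} \<and> snd q \<subseteq> snd p) \<and>
             (\<forall>q\<in>Fs p. \<forall>q'\<in>Fs p. q \<noteq> q' \<longrightarrow> snd q \<inter> snd q' = {}) \<and>
             snd p \<subseteq> Y closure_of (\<Union>(snd ` Fs p))"
    by metis
  define T' where "T' = (\<Union>p\<in>T. Fs p)"
  have disj: "\<forall>q\<in>T'. \<forall>q'\<in>T'. q \<noteq> q' \<longrightarrow> snd q \<inter> snd q' = {}"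
  proof (intro ballI impI)
    fix q q' assume "q \<in> T'" "q' \<in> T'" "q \<noteq> q'"
    then obtain p p' where pp: "p \<in> T" "q \<in> Fs p" "p' \<in> T" "q' \<in> Fs p'" unfolding T'_def by blast
    show "snd q \<inter> snd q' = {}"
    proof (cases "p = p'")
      case True then show ?thesis using Fs[OF pp(1)] pp \<open>q \<noteq> q'\<close> by blast
    next
      case False
      then have "snd p \<inter> snd p' = {}" using assms pp unfolding Inv_def by blast
      moreover have "snd q \<subseteq> snd p" "snd q' \<subseteq> snd p'" using Fs pp by blast+
      ultimately show ?thesis by blast
    qed
  qed
  have "\<Union>(snd ` T) \<subseteq> Y closure_of (\<Union>(snd ` T'))"
  proof
    fix y assume "y \<in> \<Union>(snd ` T)"
    then obtain p where "p \<in> T" "y \<in> snd p" by blast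
    then have "y \<in> Y closure_of (\<Union>(snd ` Fs p))" using Fs by blast
    moreover have "Y closure_of (\<Union>(snd ` Fs p)) \<subseteq> Y closure_of (\<Union>(snd ` T'))"
      by (rule closure_of_mono) (use \<open>p \<in> T\<close> in \<open>auto simp: T'_def\<close>)
    ultimately show "y \<in> Y closure_of (\<Union>(snd ` T'))" by blast
  qed
  then have "Y closure_of (\<Union>(snd ` T)) \<subseteq> Y closure_of (\<Union>(snd ` T'))"
    by (simp add: closure_of_minimal)
  then have "V0 \<subseteq> Y closure_of (\<Union>(snd ` T'))" using assms unfolding Inv_def by blast
  moreover have "\<forall>q\<in>T'. good (Suc n) q" using Fs unfolding T'_def by blast
  moreover have "\<forall>q\<in>T'. \<exists>p\<in>T. ext n p q" using Fs unfolding T'_def by blast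
  ultimately show ?thesis using disj unfolding Inv_def by blast
qed

lemma main_point: "\<exists>x y. x \<in> U0 \<and> y \<in> V0 \<and> (\<forall>n. (x, y) \<in> U n)"
proof -
  obtain Ts where Ts: "\<And>n. Inv n (Ts n) \<and> (\<forall>q\<in>Ts (Suc n). \<exists>p\<in>Ts n. ext n p q)"
    using dependent_nat_choice[of Inv "\<lambda>n T T'. \<forall>q\<in>T'. \<exists>p\<in>T. ext n p q"] Inv0 step by blast
  define D where "D n = \<Union>(snd ` Ts n) \<union> (topspace Y - Y closure_of V0)" for n
  have Dopen: "openin Y (D n)" for n
  proof -
    have "openin Y (\<Union>(snd ` Ts n))" using Ts[of n] unfolding Inv_def good_def by auto
    then show ?thesis unfolding D_def by (intro openin_Un openin_diff) auto
  qed
  have Ddense: "Y closure_of (D n) = topspace Y" for n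
  proof -
    have "V0 \<subseteq> Y closure_of (\<Union>(snd ` Ts n))" using Ts[of n] unfolding Inv_def by blast
    then have "Y closure_of V0 \<subseteq> Y closure_of (\<Union>(snd ` Ts n))" by (simp add: closure_of_minimal)
    moreover have "topspace Y - Y closure_of V0 \<subseteq> Y closure_of (topspace Y - Y closure_of V0)"
      by (simp add: closure_of_subset)
    moreover have "Y closure_of (D n) = Y closure_of (\<Union>(snd ` Ts n)) \<union> Y closure_of (topspace Y - Y closure_of V0)"
      unfolding D_def by (rule closure_of_Un)
    ultimately have "Y closure_of V0 \<union> (topspace Y - Y closure_of V0) \<subseteq> Y closure_of (D n)"
      by (metis Un_mono)
    moreover have "topspace Y \<subseteq> Y closure_of V0 \<union> (topspace Y - Y closure_of V0)" by (rule Diff_subset_conv[THEN iffD1], rule order_refl)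
    ultimately have "topspace Y \<subseteq> Y closure_of (D n)" by (rule order_trans[rotated])
    then show ?thesis using closure_of_subset_topspace[of Y "D n"] by (rule subset_antisym[rotated])
  qed
  have "Y closure_of (topspace Y \<inter> (\<Inter>n. D n)) = topspace Y"
    using BY Dopen Ddense unfolding Baire_space_def by simp
  from dense_meets[OF this V0] obtain y where "y \<in> V0 \<inter> (topspace Y \<inter> (\<Inter>n. D n))" by (meson ex_in_conv)
  then have y: "y \<in> V0" "\<forall>n. y \<in> D n" by auto
  have yT: "\<forall>n. \<exists>p\<in>Ts n. y \<in> snd p"
  proof
    fix n
    have "y \<in> Y closure_of V0" using y(1) closure_of_subset[OF openin_subset[OF V0(1)]] by (rule subsetD[rotated])
    then show "\<exists>p\<in>Ts n. y \<in> snd p" using y(2)[rule_format, of n] unfolding D_def by blast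
  qed
  then obtain p where p: "\<And>n. p n \<in> Ts n \<and> y \<in> snd (p n)" by metis
  have uniq: "\<And>n q. q \<in> Ts n \<Longrightarrow> y \<in> snd q \<Longrightarrow> q = p n"
    using Ts p unfolding Inv_def by blast
  have coh: "ext n (p n) (p (Suc n))" for n
  proof -
    obtain q where q: "q \<in> Ts n" "ext n q (p (Suc n))" using Ts p by blast
    then have "y \<in> snd q" using p[of "Suc n"] unfolding ext_def by blast
    then have "q = p n" using uniq q(1) by blast
    then show ?thesis using q by simp
  qed
  define G where "G k = fst (p k) k" for k
  have agree: "\<forall>i\<le>n. fst (p n) i = G i" for n
  proof (induction n)
    case 0 then show ?case by (simp add: G_def)
  next
    case (Suc n)
    show ?case
    proof (intro allI impI)
      fix i assume "i \<le> Suc n"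
      show "fst (p (Suc n)) i = G i"
      proof (cases "i = Suc n")
        case True then show ?thesis by (simp add: G_def)
      next
        case False
        then have "i \<le> n" using \<open>i \<le> Suc n\<close> by simp
        then show ?thesis using coh[of n] Suc unfolding ext_def by simp
      qed
    qed
  qed
  have gp: "good n (p n)" for n using Ts p unfolding Inv_def by blast
  have legal: "alice_legal X \<sigma> G n" for n
  proof -
    have "alice_legal X \<sigma> (fst (p n)) n" using gp[of n] unfolding good_def by blast
    moreover have "alice_legal X \<sigma> (fst (p n)) n = alice_legal X \<sigma> G n"
      by (rule alice_legal_cong) (use agree in blast)
    ultimately show ?thesis by simp
  qed
  have W1: "\<forall>g n. (\<forall>k\<le>n. alice_legal X \<sigma> g k) \<longrightarrow> bob_legal X \<sigma> g n"
    and W2: "\<forall>g. (\<forall>n. alice_legal X \<sigma> g n) \<longrightarrow> (\<Inter>n. \<Union> (bob_coll \<sigma> g n)) \<noteq> {}"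
    using win unfolding bob_winning_strategy_def by (rule conjunct1, rule conjunct2)
  have bl: "bob_legal X \<sigma> G n" for n using W1 legal by simp
  have "(\<Inter>n. \<Union> (bob_coll \<sigma> G n)) \<noteq> {}" using W2 legal by simp
  then obtain x where x: "\<forall>n. x \<in> \<Union>(bob_coll \<sigma> G n)" by auto
  have xU0: "x \<in> U0"
  proof -
    obtain B where "B \<in> bob_coll \<sigma> G 0" "x \<in> B" using x by blast
    then have "x \<in> G 0 (topspace X)" using bl[of 0] unfolding bob_legal_def prev_coll_def by auto
    then show ?thesis using gp[of 0] unfolding good_def G_def by blast
  qed
  have xyU: "(x, y) \<in> U n" for n
  proof -
    obtain B where "B \<in> bob_coll \<sigma> G (Suc n)" "x \<in> B" using x by blast
    then obtain B' where B': "B' \<in> prev_coll X \<sigma> G (Suc n)" "x \<in> G (Suc n) B'"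
      using bl[of "Suc n"] unfolding bob_legal_def by blast
    have "prev_coll X \<sigma> G (Suc n) = prev_coll X \<sigma> (fst (p (Suc n))) (Suc n)"
      by (rule prev_coll_cong) (use agree in metis)
    then have "G (Suc n) B' \<times> snd (p (Suc n)) \<subseteq> U n"
      using gp[of "Suc n"] B'(1) unfolding good_def G_def by auto
    then show ?thesis using B'(2) p by blast
  qed
  show ?thesis
    by (rule exI[of _ x], rule exI[of _ y]) (simp add: xU0 y(1) xyU)
qed

end

lemma win_parts:
  assumes "bob_winning_strategy X \<sigma>"
  shows "\<forall>g n. (\<forall>k\<le>n. alice_legal X \<sigma> g k) \<longrightarrow> bob_legal X \<sigma> g n"
    and "\<forall>g. (\<forall>n. alice_legal X \<sigma> g n) \<longrightarrow> (\<Inter>n. \<Union> (bob_coll \<sigma> g n)) \<noteq> {}"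
  using assms unfolding bob_winning_strategy_def by (rule conjunct1, rule conjunct2)

lemma baire_X:
  assumes win: "bob_winning_strategy X \<sigma>"
  shows "Baire_space X"
  unfolding Baire_space_def
proof (intro allI impI)
  fix U :: "nat \<Rightarrow> 'a set"
  assume U: "\<forall>n. openin X (U n) \<and> X closure_of U n = topspace X"
  show "X closure_of (topspace X \<inter> (\<Inter>n. U n)) = topspace X"
  proof (rule closure_eq_topspaceI)
    show "topspace X \<inter> (\<Inter>n. U n) \<subseteq> topspace X" by (rule Int_lower1)
  next
    fix W assume W: "openin X W" "W \<noteq> {}"
    define g where "g n B = (if n = 0 then W else B \<inter> U (n - 1))" for n and B :: "'a set"
    have legal: "\<forall>k\<le>n. alice_legal X \<sigma> g k" for n
    proof (induction n)
      case 0
      have "W \<subseteq> topspace X" using W(1) by (rule openin_subset)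
      then show ?case using W
        unfolding alice_legal_def prev_coll_def g_def by simp
    next
      case (Suc n)
      then have "bob_legal X \<sigma> g n" using win_parts(1)[OF win] by simp
      then have bo: "\<forall>B\<in>bob_coll \<sigma> g n. openin X B \<and> B \<noteq> {}" unfolding bob_legal_def by simp
      have "alice_legal X \<sigma> g (Suc n)"
        unfolding alice_legal_def prev_coll_def
      proof (simp, intro ballI)
        fix B assume "B \<in> bob_coll \<sigma> g n"
        then have B: "openin X B" "B \<noteq> {}" using bo by simp_all
        have "B \<inter> U n \<noteq> {}" using dense_meets[of X "U n" B] U B by simp
        moreover have "openin X (B \<inter> U n)" using B(1) U by (simp add: openin_Int)
        ultimately show "openin X (g (Suc n) B) \<and> g (Suc n) B \<noteq> {} \<and> g (Suc n) B \<subseteq> B"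
          unfolding g_def by simp
      qed
      then show ?case using Suc by (auto simp: le_Suc_eq)
    qed
    then have bl: "bob_legal X \<sigma> g n" for n using win_parts(1)[OF win] by simp
    have "\<forall>n. alice_legal X \<sigma> g n"
    proof
      fix n show "alice_legal X \<sigma> g n" using legal[of n] by simp
    qed
    then have "(\<Inter>n. \<Union> (bob_coll \<sigma> g n)) \<noteq> {}" using win_parts(2)[OF win] by simp
    then obtain x where x: "\<forall>n. x \<in> \<Union>(bob_coll \<sigma> g n)" by auto
    have xW: "x \<in> W"
    proof -
      obtain B where B: "B \<in> bob_coll \<sigma> g 0" "x \<in> B" using x by blast
      have "B \<subseteq> \<Union> (g 0 ` prev_coll X \<sigma> g 0)" using bl[of 0] B(1) unfolding bob_legal_def by simp
      then show ?thesis using B(2) unfolding prev_coll_def g_def by auto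
    qed
    have xU: "x \<in> U n" for n
    proof -
      obtain B where B: "B \<in> bob_coll \<sigma> g (Suc n)" "x \<in> B" using x by blast
      have "B \<subseteq> \<Union> (g (Suc n) ` prev_coll X \<sigma> g (Suc n))" using bl[of "Suc n"] B(1) unfolding bob_legal_def by simp
      then show ?thesis using B(2) unfolding g_def by auto
    qed
    have "x \<in> topspace X" using xW openin_subset[OF W(1)] by (rule subsetD[rotated])
    then have "x \<in> W \<inter> (topspace X \<inter> (\<Inter>n. U n))" using xW xU by simp
    then show "W \<inter> (topspace X \<inter> (\<Inter>n. U n)) \<noteq> {}" by (rule ex_in_conv[THEN iffD1, OF exI])
  qed
qed

theorem proposition2p3:
  fixes X :: "'a topology"
  assumes "Hausdorff_space X"
    and "\<forall>x \<in> topspace X. \<not> openin X {x}"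
    and "bob_has_winning_strategy X"
  shows "Baire_space X \<and>
         (\<forall>Y :: 'b topology. Baire_space Y \<longrightarrow> Baire_space (prod_topology X Y))"
proof -
  obtain \<sigma> where win: "bob_winning_strategy X \<sigma>"
    using assms(3) unfolding bob_has_winning_strategy_def by (elim exE)
  have "Baire_space (prod_topology X Y)" if BY: "Baire_space Y" for Y :: "'b topology"
    unfolding Baire_space_def
  proof (intro allI impI)
    fix U :: "nat \<Rightarrow> ('a \<times> 'b) set"
    assume U: "\<forall>n. openin (prod_topology X Y) (U n) \<and>
                  prod_topology X Y closure_of U n = topspace (prod_topology X Y)"
    show "prod_topology X Y closure_of (topspace (prod_topology X Y) \<inter> (\<Inter>n. U n)) =
          topspace (prod_topology X Y)"
    proof (rule closure_eq_topspaceI)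
      show "topspace (prod_topology X Y) \<inter> (\<Inter>n. U n) \<subseteq> topspace (prod_topology X Y)" by (rule Int_lower1)
    next
      fix W assume W: "openin (prod_topology X Y) W" "W \<noteq> {}"
      then obtain a b where ab: "(a, b) \<in> W" by auto
      obtain U0 V0 where UV: "openin X U0" "openin Y V0" "a \<in> U0" "b \<in> V0" "U0 \<times> V0 \<subseteq> W"
        using W(1) ab unfolding openin_prod_topology_alt by meson
      have Uo: "\<And>n. openin (prod_topology X Y) (U n)" using U by simp
      have Ud: "\<And>n. prod_topology X Y closure_of U n = topspace (prod_topology X Y)" using U by simp
      have ne: "U0 \<noteq> {}" "V0 \<noteq> {}" using UV by auto
      have "\<exists>x y. x \<in> U0 \<and> y \<in> V0 \<and> (\<forall>n. (x, y) \<in> U n)"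
        by (rule main_point[OF win Uo Ud UV(1) ne(1) UV(2) ne(2) BY])
      then obtain x y where xy: "x \<in> U0" "y \<in> V0" "\<forall>n. (x, y) \<in> U n" by (elim exE conjE)
      have "x \<in> topspace X" using xy(1) openin_subset[OF UV(1)] by (rule subsetD[rotated])
      moreover have "y \<in> topspace Y" using xy(2) openin_subset[OF UV(2)] by (rule subsetD[rotated])
      ultimately have "(x, y) \<in> topspace (prod_topology X Y)" by simp
      moreover have "(x, y) \<in> W" using xy UV(5) by blast
      ultimately have "(x, y) \<in> W \<inter> (topspace (prod_topology X Y) \<inter> (\<Inter>n. U n))" using xy(3) by simp
      then show "W \<inter> (topspace (prod_topology X Y) \<inter> (\<Inter>n. U n)) \<noteq> {}" by (rule ex_in_conv[THEN iffD1, OF exI])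
    qed
  qed
  then show ?thesis using baire_X[OF win] by simp
qed

end
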